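(* Let $M$ be a connected manifold, $\alpha=\sqrt{a_{ij}y^iy^j}$ a Riemannian metric and $\beta=b_iy^i$ a $1$-form on $M$ with $b:=\|\beta\|_\alpha<1$. Suppose $\tau=\tau(x)$ is a smooth function on $M$ such that $$b_{i|j}=\tau\{(1+2b^2)a_{ij}-3b_ib_j\},\qquad \tau_i=-2\tau^2b_i,$$ where $b_{i|j}$ is the covariant derivative of $\beta$ with respect to $\alpha$ and $\tau_i=\partial\tau/\partial x^i$. Then $\tau=c(1-b^2)$ for some constant $c$. *)

theory Defs
  imports "HOL-Analysis.Analysis"
begin

definition pd :: "(real^'n \<Rightarrow> real) \<Rightarrow> 'n \<Rightarrow> real^'n \<Rightarrow> real" where
  "pd f i x = frechet_derivative f (at x) (axis i 1)"

fun Ck_on :: "nat \<Rightarrow> (real^'n) set \<Rightarrow> (real^'n \<Rightarrow> real) \<Rightarrow> bool" where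
  "Ck_on 0 U f = continuous_on U f"
| "Ck_on (Suc k) U f = ((\<forall>x\<in>U. f differentiable (at x)) \<and> (\<forall>i. Ck_on k U (pd f i)))"

definition smooth_on :: "(real^'n) set \<Rightarrow> (real^'n \<Rightarrow> real) \<Rightarrow> bool" where
  "smooth_on U f \<longleftrightarrow> (\<forall>k. Ck_on k U f)"

definition smooth_map_on :: "(real^'n) set \<Rightarrow> (real^'n \<Rightarrow> real^'m) \<Rightarrow> bool" where
  "smooth_map_on U f \<longleftrightarrow> (\<forall>j. smooth_on U (\<lambda>x. f x $ j))"

definition jacobian :: "(real^'n \<Rightarrow> real^'m) \<Rightarrow> real^'n \<Rightarrow> real^'n^'m" where
  "jacobian f x = (\<chi> j i. pd (\<lambda>y. f y $ j) i x)"

definition is_chart :: "'a topology \<Rightarrow> 'a set \<times> ('a \<Rightarrow> real^'n) \<Rightarrow> bool" where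
  "is_chart X c \<longleftrightarrow> openin X (fst c) \<and> open (snd c ` fst c) \<and>
     homeomorphic_map (subtopology X (fst c)) (subtopology euclidean (snd c ` fst c)) (snd c)"

definition transition :: "'a set \<times> ('a \<Rightarrow> real^'n) \<Rightarrow> 'a set \<times> ('a \<Rightarrow> real^'n)
    \<Rightarrow> real^'n \<Rightarrow> real^'n" where
  "transition c d = snd d \<circ> inv_into (fst c) (snd c)"

definition smooth_atlas :: "'a topology \<Rightarrow> ('a set \<times> ('a \<Rightarrow> real^'n)) set \<Rightarrow> bool" where
  "smooth_atlas X A \<longleftrightarrow> (\<forall>c\<in>A. is_chart X c) \<and> (\<Union>c\<in>A. fst c) = topspace X \<and>
     (\<forall>c\<in>A. \<forall>d\<in>A. smooth_map_on (snd c ` (fst c \<inter> fst d)) (transition c d))"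

definition smooth_manifold :: "'a topology \<Rightarrow> ('a set \<times> ('a \<Rightarrow> real^'n)) set \<Rightarrow> bool" where
  "smooth_manifold X A \<longleftrightarrow> Hausdorff_space X \<and> second_countable X \<and> smooth_atlas X A"

text \<open>A Riemannian metric given by its local components a_ij in each chart
  (g c y is the matrix (a_ij) at coordinate point y of chart c): smooth, symmetric,
  positive definite, transforming as a (0,2)-tensor.\<close>

definition riemannian_metric ::
  "('a set \<times> ('a \<Rightarrow> real^'n)) set \<Rightarrow> ('a set \<times> ('a \<Rightarrow> real^'n) \<Rightarrow> real^'n \<Rightarrow> real^'n^'n) \<Rightarrow> bool" where
  "riemannian_metric A g \<longleftrightarrow>
     (\<forall>c\<in>A. (\<forall>i j. smooth_on (snd c ` fst c) (\<lambda>y. g c y $ i $ j)) \<and>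
        (\<forall>y\<in>snd c ` fst c. transpose (g c y) = g c y \<and>
            (\<forall>v. v \<noteq> 0 \<longrightarrow> v \<bullet> (g c y *v v) > 0))) \<and>
     (\<forall>c\<in>A. \<forall>d\<in>A. \<forall>y\<in>snd c ` (fst c \<inter> fst d).
        g c y = transpose (jacobian (transition c d) y) ** g d (transition c d y)
                ** jacobian (transition c d) y)"

text \<open>A smooth 1-form given by its local components b_i in each chart.\<close>

definition one_form ::
  "('a set \<times> ('a \<Rightarrow> real^'n)) set \<Rightarrow> ('a set \<times> ('a \<Rightarrow> real^'n) \<Rightarrow> real^'n \<Rightarrow> real^'n) \<Rightarrow> bool" where
  "one_form A b \<longleftrightarrow>
     (\<forall>c\<in>A. \<forall>i. smooth_on (snd c ` fst c) (\<lambda>y. b c y $ i)) \<and>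
     (\<forall>c\<in>A. \<forall>d\<in>A. \<forall>y\<in>snd c ` (fst c \<inter> fst d).
        b c y = transpose (jacobian (transition c d) y) *v b d (transition c d y))"

text \<open>Local expressions: squared alpha-norm b^2 = a^{ij} b_i b_j, Christoffel symbols
  Gamma^k_ij of the Levi-Civita connection, covariant derivative b_{i|j}.\<close>

definition norm_sq :: "real^'n^'n \<Rightarrow> real^'n \<Rightarrow> real" where
  "norm_sq a v = v \<bullet> (matrix_inv a *v v)"

definition christoffel :: "(real^'n \<Rightarrow> real^'n^'n) \<Rightarrow> real^'n \<Rightarrow> 'n \<Rightarrow> 'n \<Rightarrow> 'n \<Rightarrow> real" where
  "christoffel a x k i j = (1/2) * (\<Sum>l\<in>UNIV. matrix_inv (a x) $ k $ l *
      (pd (\<lambda>y. a y $ l $ j) i x + pd (\<lambda>y. a y $ l $ i) j x - pd (\<lambda>y. a y $ i $ j) l x))"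

definition covd :: "(real^'n \<Rightarrow> real^'n^'n) \<Rightarrow> (real^'n \<Rightarrow> real^'n) \<Rightarrow> real^'n \<Rightarrow> 'n \<Rightarrow> 'n \<Rightarrow> real" where
  "covd a b x i j = pd (\<lambda>y. b y $ i) j x - (\<Sum>k\<in>UNIV. christoffel a x k i j * b x $ k)"

end

theory Submission
  imports Defs
begin

lemma pd_eq: "(u has_derivative D) (at x) \<Longrightarrow> pd u i x = D (axis i 1)"
  unfolding pd_def using frechet_derivative_at by metis

lemma pd_has:
  fixes u :: "real^'n \<Rightarrow> real"
  assumes "u differentiable (at x)"
  shows "(u has_derivative (\<lambda>v. \<Sum>i\<in>UNIV. v$i * pd u i x)) (at x)"
proof -
  let ?D = "frechet_derivative u (at x)"
  have d: "(u has_derivative ?D) (at x)" using assms frechet_derivative_works by blast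
  have lin: "linear ?D" using d has_derivative_linear by blast
  have "?D v = (\<Sum>i\<in>UNIV. v$i * pd u i x)" for v
  proof -
    have "?D v = ?D (\<Sum>i\<in>UNIV. v$i *\<^sub>R axis i 1)"
      using basis_expansion[of v] by (simp add: scalar_mult_eq_scaleR)
    also have "\<dots> = (\<Sum>i\<in>UNIV. v$i * ?D (axis i 1))"
      using lin by (simp add: linear_sum linear_scale)
    finally show ?thesis by (simp add: pd_def)
  qed
  then show ?thesis using d by (metis (no_types, lifting) ext)
qed

lemma axis_sum[simp]: "(\<Sum>i\<in>UNIV. axis k (1::real) $ i * c i) = c k"
proof -
  have "(\<Sum>i\<in>UNIV. axis k (1::real) $ i * c i) = (\<Sum>i\<in>UNIV. if i = k then c i else 0)"
    by (rule sum.cong) (auto simp: axis_def)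
  then show ?thesis by simp
qed

lemma differentiable_prod_my:
  fixes u :: "'i \<Rightarrow> real^'n \<Rightarrow> real"
  shows "finite S \<Longrightarrow> (\<forall>i\<in>S. (u i) differentiable (at x)) \<Longrightarrow> (\<lambda>y. \<Prod>i\<in>S. u i y) differentiable (at x)"
  by (induction S rule: finite_induct) auto

lemma pd_mult:
  fixes u w :: "real^'n \<Rightarrow> real"
  assumes "u differentiable (at x)" "w differentiable (at x)"
  shows "pd (\<lambda>y. u y * w y) k x = pd u k x * w x + u x * pd w k x"
proof -
  have "((\<lambda>y. u y * w y) has_derivative (\<lambda>v. u x * (\<Sum>i\<in>UNIV. v$i * pd w i x) + (\<Sum>i\<in>UNIV. v$i * pd u i x) * w x)) (at x)"
    by (rule has_derivative_mult[OF pd_has[OF assms(1)] pd_has[OF assms(2)]])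
  from pd_eq[OF this, of k] show ?thesis by simp
qed

lemma pd_sum:
  fixes u :: "'i \<Rightarrow> real^'n \<Rightarrow> real"
  assumes "finite S" "\<forall>s\<in>S. (u s) differentiable (at x)"
  shows "pd (\<lambda>y. \<Sum>s\<in>S. u s y) k x = (\<Sum>s\<in>S. pd (u s) k x)"
proof -
  have "((\<lambda>y. \<Sum>s\<in>S. u s y) has_derivative (\<lambda>v. \<Sum>s\<in>S. (\<Sum>i\<in>UNIV. v$i * pd (u s) i x))) (at x)"
    using assms by (intro has_derivative_sum pd_has) auto
  from pd_eq[OF this, of k] show ?thesis by simp
qed

lemma pd_divide:
  fixes u w :: "real^'n \<Rightarrow> real"
  assumes "u differentiable (at x)" "w differentiable (at x)" "w x \<noteq> 0"
  shows "pd (\<lambda>y. u y / w y) k x = pd u k x / w x - u x * pd w k x / (w x * w x)"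
proof -
  have "((\<lambda>y. u y * inverse (w y)) has_derivative (\<lambda>v. u x * (- (inverse (w x) * (\<Sum>i\<in>UNIV. v$i * pd w i x) * inverse (w x))) + (\<Sum>i\<in>UNIV. v$i * pd u i x) * inverse (w x))) (at x)"
    by (rule has_derivative_mult[OF pd_has[OF assms(1)] Deriv.has_derivative_inverse[OF assms(3) pd_has[OF assms(2)]]])
  from pd_eq[OF this, of k] have h1: "pd (\<lambda>y. u y * inverse (w y)) k x = u x * (- (inverse (w x) * pd w k x * inverse (w x))) + pd u k x * inverse (w x)" by simp
  have h2: "u x * (- (inverse (w x) * pd w k x * inverse (w x))) + pd u k x * inverse (w x)
     = pd u k x / w x - u x * pd w k x / (w x * w x)"
    by (simp add: divide_inverse inverse_mult_distrib)
  have e: "(\<lambda>y. u y / w y) = (\<lambda>y. u y * inverse (w y))" by (simp add: divide_inverse)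
  show ?thesis unfolding e using h1 h2 by (rule trans)
qed

lemma pd_local:
  fixes u w :: "real^'n \<Rightarrow> real"
  assumes "open W" "x \<in> W" "\<forall>y\<in>W. u y = w y"
  shows "pd u k x = pd w k x"
proof -
  have "(u has_derivative D) (at x) \<longleftrightarrow> (w has_derivative D) (at x)" for D
  proof
    assume "(u has_derivative D) (at x)"
    then show "(w has_derivative D) (at x)"
      by (rule has_derivative_transform_within_open[OF _ assms(1,2)]) (use assms(3) in auto)
  next
    assume "(w has_derivative D) (at x)"
    then show "(u has_derivative D) (at x)"
      by (rule has_derivative_transform_within_open[OF _ assms(1,2)]) (use assms(3) in auto)
  qed
  then have "frechet_derivative u (at x) = frechet_derivative w (at x)"
    unfolding frechet_derivative_def by simp
  then show ?thesis by (simp add: pd_def)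
qed

lemma diff_local:
  fixes u w :: "real^'n \<Rightarrow> real"
  assumes "open W" "x \<in> W" "\<forall>y\<in>W. u y = w y" "u differentiable (at x)"
  shows "w differentiable (at x)"
proof -
  obtain D where "(u has_derivative D) (at x)" using assms(4) unfolding differentiable_def by blast
  then have "(w has_derivative D) (at x)"
    by (rule has_derivative_transform_within_open[OF _ assms(1,2)]) (use assms(3) in auto)
  then show ?thesis unfolding differentiable_def by blast
qed

lemma alg:
  fixes A :: "'n::finite \<Rightarrow> 'n \<Rightarrow> real" and B bv P Q :: "'n \<Rightarrow> real" and da :: "'n\<Rightarrow>'n\<Rightarrow>'n\<Rightarrow>real"
  assumes symA: "\<forall>i j. A i j = A j i"
    and bv: "\<forall>i. bv i = (\<Sum>j\<in>UNIV. A i j * B j)"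
    and dId: "\<forall>i. (\<Sum>j\<in>UNIV. da i j k * B j + A i j * Q j) = P i"
  shows "(\<Sum>i\<in>UNIV. P i * B i + bv i * Q i) =
    2 * (\<Sum>i\<in>UNIV. B i * (P i - 1/2 * (\<Sum>l\<in>UNIV. B l * (da l k i + da l i k - da i k l))))"
proof -
  have S1: "(\<Sum>i\<in>UNIV. bv i * Q i) = (\<Sum>j\<in>UNIV. B j * (\<Sum>i\<in>UNIV. A j i * Q i))"
  proof -
    have "(\<Sum>i\<in>UNIV. bv i * Q i) = (\<Sum>i\<in>UNIV. \<Sum>j\<in>UNIV. A i j * B j * Q i)"
      using bv by (simp add: sum_distrib_right)
    also have "\<dots> = (\<Sum>j\<in>UNIV. \<Sum>i\<in>UNIV. A i j * B j * Q i)" by (rule sum.swap)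
    also have "\<dots> = (\<Sum>j\<in>UNIV. B j * (\<Sum>i\<in>UNIV. A j i * Q i))"
      using symA by (simp add: sum_distrib_left mult.commute mult.left_commute)
    finally show ?thesis .
  qed
  have S2: "\<And>j. (\<Sum>i\<in>UNIV. A j i * Q i) = P j - (\<Sum>i\<in>UNIV. da j i k * B i)"
    using dId by (simp add: sum.distrib algebra_simps)
  have S3: "(\<Sum>i\<in>UNIV. \<Sum>l\<in>UNIV. B i * (B l * da l k i)) = (\<Sum>i\<in>UNIV. \<Sum>l\<in>UNIV. B i * (B l * da i k l))"
    by (subst sum.swap) (simp add: mult.commute mult.left_commute)
  have L: "(\<Sum>i\<in>UNIV. P i * B i + bv i * Q i) = 2 * (\<Sum>i\<in>UNIV. B i * P i) - (\<Sum>j\<in>UNIV. \<Sum>i\<in>UNIV. B j * (B i * da j i k))"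
  proof -
    have "(\<Sum>i\<in>UNIV. P i * B i + bv i * Q i) = (\<Sum>i\<in>UNIV. P i * B i) + (\<Sum>i\<in>UNIV. bv i * Q i)"
      by (rule sum.distrib)
    also have "\<dots> = (\<Sum>i\<in>UNIV. P i * B i) + (\<Sum>j\<in>UNIV. B j * (P j - (\<Sum>i\<in>UNIV. da j i k * B i)))"
      unfolding S1 S2 ..
    also have "\<dots> = (\<Sum>i\<in>UNIV. P i * B i) + (\<Sum>j\<in>UNIV. B j * P j) - (\<Sum>j\<in>UNIV. B j * (\<Sum>i\<in>UNIV. da j i k * B i))"
      by (simp add: right_diff_distrib sum_subtractf)
    also have "\<dots> = 2 * (\<Sum>i\<in>UNIV. B i * P i) - (\<Sum>j\<in>UNIV. \<Sum>i\<in>UNIV. B j * (B i * da j i k))"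
      by (simp add: sum_distrib_left mult.commute mult.left_commute)
    finally show ?thesis .
  qed
  have R: "2 * (\<Sum>i\<in>UNIV. B i * (P i - 1/2 * (\<Sum>l\<in>UNIV. B l * (da l k i + da l i k - da i k l))))
     = 2 * (\<Sum>i\<in>UNIV. B i * P i) - (\<Sum>i\<in>UNIV. \<Sum>l\<in>UNIV. B i * (B l * da l i k))"
    by (simp add: sum.distrib S3 algebra_simps sum_subtractf sum_distrib_left)
  show ?thesis unfolding L R
    by (subst sum.swap) (simp add: mult.commute mult.left_commute)
qed

lemma inner_transpose: "v \<bullet> (transpose J *v w) = (J *v v) \<bullet> (w::real^'n)"
  by (metis dot_lmul_matrix vector_transpose_matrix)

lemma inj_invertible:
  fixes G :: "real^'n^'n"
  assumes "\<And>v. G *v v = 0 \<Longrightarrow> v = 0"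
  shows "invertible G" "det G \<noteq> 0"
proof -
  have "inj ((*v) G)"
  proof (rule injI)
    fix v w assume "G *v v = G *v w"
    then have "G *v (v - w) = 0" by (simp add: matrix_vector_mult_diff_distrib)
    then have "v - w = 0" by (rule assms)
    then show "v = w" by simp
  qed
  then have "det (matrix ((*v) G)) \<noteq> 0"
    using det_nz_iff_inj[of "(*v) G"] matrix_vector_mul_linear by blast
  then show "det G \<noteq> 0" by simp
  then show "invertible G" using invertible_det_nz by blast
qed

lemma posdef_invertible:
  fixes G :: "real^'n^'n"
  assumes "\<forall>v. v \<noteq> 0 \<longrightarrow> v \<bullet> (G *v v) > 0"
  shows "invertible G" "det G \<noteq> 0"
proof -
  have "\<And>v. G *v v = 0 \<Longrightarrow> v = 0" using assms by force
  then show "invertible G" "det G \<noteq> 0" using inj_invertible by blast+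
qed

lemma matrix_inv_props:
  fixes G :: "real^'n^'n"
  assumes "invertible G"
  shows "G ** matrix_inv G = mat 1" "matrix_inv G ** G = mat 1"
proof -
  have "\<exists>A'. G ** A' = mat 1 \<and> A' ** G = mat 1" using assms invertible_def by blast
  then have "G ** matrix_inv G = mat 1 \<and> matrix_inv G ** G = mat 1"
    unfolding matrix_inv_def by (rule someI_ex)
  then show "G ** matrix_inv G = mat 1" "matrix_inv G ** G = mat 1" by auto
qed

lemma matrix_inv_solve:
  fixes G :: "real^'n^'n"
  assumes "invertible G" "G *v z = bb"
  shows "matrix_inv G *v bb = z"
proof -
  have "(matrix_inv G ** G) *v z = matrix_inv G *v (G *v z)"
    by (simp add: matrix_vector_mul_assoc)
  then have "matrix_inv G *v bb = (matrix_inv G ** G) *v z" using assms(2) by simp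
  then show ?thesis using matrix_inv_props[OF assms(1)] by simp
qed

lemma matrix_inv_mul:
  fixes G :: "real^'n^'n"
  assumes "invertible G"
  shows "G *v (matrix_inv G *v bb) = bb"
  using matrix_inv_props[OF assms] by (simp add: matrix_vector_mul_assoc)

lemma matrix_inv_sym:
  fixes G :: "real^'n^'n"
  assumes "invertible G" "transpose G = G"
  shows "transpose (matrix_inv G) = matrix_inv G"
proof -
  let ?I = "matrix_inv G"
  have "G ** transpose ?I = transpose (?I ** G)"
    using assms(2) by (simp add: matrix_transpose_mul)
  also have "\<dots> = mat 1" using matrix_inv_props[OF assms(1)] by (simp add: transpose_mat)
  finally have e: "G ** transpose ?I = mat 1" .
  have "transpose ?I = (?I ** G) ** transpose ?I" using matrix_inv_props[OF assms(1)] by simp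
  also have "\<dots> = ?I ** (G ** transpose ?I)" by (simp add: matrix_mul_assoc)
  also have "\<dots> = ?I" using e by simp
  finally show ?thesis .
qed

lemma norm_sq_solve:
  fixes G :: "real^'n^'n"
  assumes "invertible G" "G *v z = bb"
  shows "norm_sq G bb = bb \<bullet> z"
  unfolding norm_sq_def using matrix_inv_solve[OF assms] by simp

lemma norm_sq_invariant:
  fixes Gc Gd J :: "real^'n^'n"
  assumes Gc: "Gc = transpose J ** Gd ** J" and bc: "bc = transpose J *v bd"
    and pos: "\<forall>v. v \<noteq> 0 \<longrightarrow> v \<bullet> (Gc *v v) > 0"
    and invd: "invertible Gd"
  shows "norm_sq Gc bc = norm_sq Gd bd"
proof -
  have Gcv: "Gc *v v = transpose J *v (Gd *v (J *v v))" for v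
    unfolding Gc by (simp add: matrix_vector_mul_assoc matrix_mul_assoc)
  have "\<And>v. J *v v = 0 \<Longrightarrow> v = 0"
  proof (rule ccontr)
    fix v assume "J *v v = 0" "v \<noteq> 0"
    then have "v \<bullet> (Gc *v v) > 0" using pos by auto
    moreover have "v \<bullet> (Gc *v v) = 0" unfolding Gcv inner_transpose using \<open>J *v v = 0\<close> by simp
    ultimately show False by simp
  qed
  then have invJ: "invertible J" using inj_invertible by blast
  have invc: "invertible Gc" using posdef_invertible pos by blast
  define x where "x = matrix_inv Gd *v bd"
  define z where "z = matrix_inv J *v x"
  have Jz: "J *v z = x" unfolding z_def using matrix_inv_mul[OF invJ] by simp
  have Gdx: "Gd *v x = bd" unfolding x_def using matrix_inv_mul[OF invd] by simp
  have "Gc *v z = bc" unfolding Gcv Jz Gdx bc ..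
  then have "norm_sq Gc bc = bc \<bullet> z" by (rule norm_sq_solve[OF invc])
  also have "\<dots> = bd \<bullet> x" unfolding bc by (metis inner_commute inner_transpose Jz)
  also have "\<dots> = norm_sq Gd bd" unfolding x_def norm_sq_def ..
  finally show ?thesis .
qed

lemma det_differentiable:
  fixes M :: "real^'n \<Rightarrow> real^'m^'m"
  assumes "\<forall>i j. (\<lambda>y. M y $ i $ j) differentiable (at x)"
  shows "(\<lambda>y. det (M y)) differentiable (at x)"
proof -
  have "finite {p. p permutes (UNIV::'m set)}" by (simp add: finite_permutations)
  moreover have "(\<lambda>y. of_int (sign p) * (\<Prod>i\<in>UNIV. M y $ i $ p i)) differentiable (at x)" for p
    using assms by (intro differentiable_mult differentiable_const differentiable_prod_my) auto
  ultimately have "(\<lambda>y. \<Sum>p\<in>{p. p permutes (UNIV::'m set)}. of_int (sign p) * (\<Prod>i\<in>UNIV. M y $ i $ p i)) differentiable (at x)"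
    by (intro differentiable_sum) auto
  then show ?thesis unfolding det_def .
qed

lemma cramer_inv:
  fixes G :: "real^'n^'n"
  assumes "det G \<noteq> 0"
  shows "(matrix_inv G *v bb) $ k = det (\<chi> i j. if j = k then bb $ i else G $ i $ j) / det G"
proof -
  have inv: "invertible G" using assms invertible_det_nz by blast
  have "G *v (matrix_inv G *v bb) = bb" by (rule matrix_inv_mul[OF inv])
  then have "matrix_inv G *v bb = (\<chi> k. det (\<chi> i j. if j = k then bb $ i else G $ i $ j) / det G)"
    using cramer[OF assms] by blast
  then show ?thesis by simp
qed

lemma pd_cminus:
  fixes u :: "real^'n \<Rightarrow> real"
  assumes "u differentiable (at x)"
  shows "pd (\<lambda>y. c - u y) k x = - pd u k x"
proof -
  have "((\<lambda>y. c - u y) has_derivative (\<lambda>v. 0 - (\<Sum>i\<in>UNIV. v$i * pd u i x))) (at x)"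
    by (intro has_derivative_diff has_derivative_const pd_has[OF assms])
  from pd_eq[OF this, of k] show ?thesis by simp
qed

lemma final_arith:
  fixes T c bk :: real
  assumes "c \<noteq> 0"
  shows "(- 2 * T^2 * bk) / c - T * (- (2 * T * c * bk)) / (c * c) = 0"
  using assms by (simp add: power2_eq_square)

lemma local_zero:
  fixes G :: "real^'n \<Rightarrow> real^'n^'n" and bb :: "real^'n \<Rightarrow> real^'n" and T :: "real^'n \<Rightarrow> real"
  assumes W: "open W"
    and dG: "\<forall>i j. \<forall>y\<in>W. (\<lambda>z. G z $ i $ j) differentiable (at y)"
    and db: "\<forall>i. \<forall>y\<in>W. (\<lambda>z. bb z $ i) differentiable (at y)"
    and dT: "\<forall>y\<in>W. T differentiable (at y)"
    and sym: "\<forall>y\<in>W. transpose (G y) = G y"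
    and pos: "\<forall>y\<in>W. \<forall>v. v \<noteq> 0 \<longrightarrow> v \<bullet> (G y *v v) > 0"
    and lt1: "\<forall>y\<in>W. norm_sq (G y) (bb y) < 1"
    and e1: "\<forall>y\<in>W. \<forall>i j. covd G bb y i j =
          T y * ((1 + 2 * norm_sq (G y) (bb y)) * G y $ i $ j - 3 * bb y $ i * bb y $ j)"
    and e2: "\<forall>y\<in>W. \<forall>i. pd T i y = - 2 * (T y)^2 * bb y $ i"
    and y: "y \<in> W"
  shows "((\<lambda>z. T z / (1 - norm_sq (G z) (bb z))) has_derivative (\<lambda>v. 0)) (at y)"
proof -
  define Bv where "Bv z = matrix_inv (G z) *v bb z" for z
  define f where "f z = norm_sq (G z) (bb z)" for z
  have inv: "invertible (G z)" "det (G z) \<noteq> 0" if "z \<in> W" for z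
    using posdef_invertible pos that by blast+
  have fB: "f = (\<lambda>z. \<Sum>i\<in>UNIV. bb z $ i * Bv z $ i)"
    unfolding f_def Bv_def norm_sq_def inner_vec_def by simp
  have GB: "(\<Sum>j\<in>UNIV. G z $ i $ j * Bv z $ j) = bb z $ i" if "z \<in> W" for z i
  proof -
    have "G z *v Bv z = bb z" unfolding Bv_def by (rule matrix_inv_mul[OF inv(1)[OF that]])
    then show ?thesis by (simp add: matrix_vector_mult_def vec_eq_iff)
  qed
  have dB: "(\<lambda>w. Bv w $ i) differentiable (at z)" if "z \<in> W" for z i
  proof -
    have eq: "\<forall>w\<in>W. det (\<chi> a b. if b = i then bb w $ a else G w $ a $ b) / det (G w) = Bv w $ i"
    proof
      fix w assume w: "w \<in> W"
      show "det (\<chi> a b. if b = i then bb w $ a else G w $ a $ b) / det (G w) = Bv w $ i"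
        unfolding Bv_def by (subst cramer_inv[OF inv(2)[OF w]]) (rule refl)
    qed
    have d1: "(\<lambda>w. det (\<chi> a b. if b = i then bb w $ a else G w $ a $ b)) differentiable (at z)"
      apply (rule det_differentiable)
      apply (intro allI)
      subgoal for a b by (cases "b = i") (use dG db that in auto)
      done
    have d2: "(\<lambda>w. det (G w)) differentiable (at z)"
      by (rule det_differentiable) (use dG that in auto)
    have "(\<lambda>w. det (\<chi> a b. if b = i then bb w $ a else G w $ a $ b) / det (G w)) differentiable (at z)"
      using d1 d2 inv(2)[OF that] by (rule differentiable_divide)
    then show ?thesis using diff_local[OF W that eq] by blast
  qed
  have df: "f differentiable (at y)"
    unfolding fB using dB db y by (intro differentiable_sum differentiable_mult) auto
  have pdf: "pd f k y = 2 * T y * (1 - f y) * bb y $ k" for k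
  proof -
    define P where "P i = pd (\<lambda>z. bb z $ i) k y" for i
    define Q where "Q j = pd (\<lambda>z. Bv z $ j) k y" for j
    define da where "da l j i = pd (\<lambda>z. G z $ l $ j) i y" for l j i
    have dId: "\<forall>i. (\<Sum>j\<in>UNIV. da i j k * Bv y $ j + G y $ i $ j * Q j) = P i"
    proof
      fix i
      have "pd (\<lambda>z. \<Sum>j\<in>UNIV. G z $ i $ j * Bv z $ j) k y = pd (\<lambda>z. bb z $ i) k y"
        by (rule pd_local[OF W y]) (use GB in auto)
      moreover have "pd (\<lambda>z. \<Sum>j\<in>UNIV. G z $ i $ j * Bv z $ j) k y
          = (\<Sum>j\<in>UNIV. pd (\<lambda>z. G z $ i $ j * Bv z $ j) k y)"
        by (rule pd_sum) (use dG dB y in auto)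
      moreover have "pd (\<lambda>z. G z $ i $ j * Bv z $ j) k y = da i j k * Bv y $ j + G y $ i $ j * Q j" for j
        unfolding da_def Q_def by (rule pd_mult) (use dG dB y in auto)
      ultimately show "(\<Sum>j\<in>UNIV. da i j k * Bv y $ j + G y $ i $ j * Q j) = P i"
        unfolding P_def by simp
    qed
    have pdf1: "pd f k y = (\<Sum>i\<in>UNIV. P i * Bv y $ i + bb y $ i * Q i)"
    proof -
      have "pd f k y = (\<Sum>i\<in>UNIV. pd (\<lambda>z. bb z $ i * Bv z $ i) k y)"
        unfolding fB by (rule pd_sum) (use db dB y in auto)
      moreover have "pd (\<lambda>z. bb z $ i * Bv z $ i) k y = P i * Bv y $ i + bb y $ i * Q i" for i
        unfolding P_def Q_def by (rule pd_mult) (use db dB y in auto)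
      ultimately show ?thesis by simp
    qed
    have symA: "\<forall>i j. G y $ i $ j = G y $ j $ i"
    proof (intro allI)
      fix i j
      have "G y $ i $ j = transpose (G y) $ i $ j" using sym y by simp
      also have "\<dots> = G y $ j $ i" by (simp add: transpose_def)
      finally show "G y $ i $ j = G y $ j $ i" .
    qed
    have bv: "\<forall>i. bb y $ i = (\<Sum>j\<in>UNIV. G y $ i $ j * Bv y $ j)" using GB y by simp
    have pdf2: "pd f k y = 2 * (\<Sum>i\<in>UNIV. Bv y $ i * (P i - 1/2 * (\<Sum>l\<in>UNIV. Bv y $ l * (da l k i + da l i k - da i k l))))"
      unfolding pdf1 by (rule alg[where A="\<lambda>i j. G y $ i $ j" and bv="\<lambda>i. bb y $ i" and B="\<lambda>j. Bv y $ j" and da=da and Q=Q and P=P and k=k, OF symA bv dId])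
    define ai where "ai = matrix_inv (G y)"
    have invsym: "ai $ m $ l = ai $ l $ m" for m l
    proof -
      have tt: "transpose ai = ai" unfolding ai_def by (rule matrix_inv_sym[OF inv(1)[OF y] sym[rule_format, OF y]])
      have "ai $ m $ l = transpose ai $ m $ l" using tt by simp
      also have "\<dots> = ai $ l $ m" by (simp add: transpose_def)
      finally show ?thesis .
    qed
    have Bvl: "Bv y $ l = (\<Sum>m\<in>UNIV. ai $ l $ m * bb y $ m)" for l
      unfolding Bv_def ai_def by (simp add: matrix_vector_mult_def)
    have cov: "covd G bb y i k = P i - 1/2 * (\<Sum>l\<in>UNIV. Bv y $ l * (da l k i + da l i k - da i k l))" for i
    proof -
      define X where "X l = da l k i + da l i k - da i k l" for l
      have ch: "christoffel G y m i k = 1/2 * (\<Sum>l\<in>UNIV. ai $ l $ m * X l)" for m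
      proof -
        have "christoffel G y m i k = 1/2 * (\<Sum>l\<in>UNIV. ai $ m $ l * X l)"
          unfolding christoffel_def X_def da_def ai_def ..
        also have "(\<Sum>l\<in>UNIV. ai $ m $ l * X l) = (\<Sum>l\<in>UNIV. ai $ l $ m * X l)"
        proof (rule sum.cong[OF refl])
          fix l show "ai $ m $ l * X l = ai $ l $ m * X l" using invsym[of m l] by simp
        qed
        finally show ?thesis .
      qed
      have "(\<Sum>m\<in>UNIV. christoffel G y m i k * bb y $ m)
          = (\<Sum>m\<in>UNIV. \<Sum>l\<in>UNIV. 1/2 * (ai $ l $ m * bb y $ m * X l))"
        unfolding ch by (simp add: sum_distrib_left sum_distrib_right mult_ac)
      also have "\<dots> = (\<Sum>l\<in>UNIV. \<Sum>m\<in>UNIV. 1/2 * (ai $ l $ m * bb y $ m * X l))"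
        by (rule sum.swap)
      also have "\<dots> = 1/2 * (\<Sum>l\<in>UNIV. Bv y $ l * X l)"
        unfolding Bvl by (simp add: sum_distrib_left sum_distrib_right mult_ac)
      finally show ?thesis unfolding covd_def P_def X_def by simp
    qed
    have "pd f k y = 2 * (\<Sum>i\<in>UNIV. Bv y $ i * covd G bb y i k)"
      unfolding pdf2 cov ..
    also have "\<dots> = 2 * (\<Sum>i\<in>UNIV. Bv y $ i * (T y * ((1 + 2 * f y) * G y $ i $ k - 3 * bb y $ i * bb y $ k)))"
      using e1 y unfolding f_def by simp
    also have "\<dots> = 2 * T y * ((1 + 2 * f y) * (\<Sum>i\<in>UNIV. G y $ k $ i * Bv y $ i) - 3 * (\<Sum>i\<in>UNIV. bb y $ i * Bv y $ i) * bb y $ k)"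
    proof -
      have "(\<Sum>i\<in>UNIV. Bv y $ i * (T y * ((1 + 2 * f y) * G y $ i $ k - 3 * bb y $ i * bb y $ k)))
         = (\<Sum>i\<in>UNIV. (T y * (1 + 2 * f y)) * (G y $ k $ i * Bv y $ i) - (3 * T y * bb y $ k) * (bb y $ i * Bv y $ i))"
      proof (rule sum.cong[OF refl])
        fix x show "Bv y $ x * (T y * ((1 + 2 * f y) * G y $ x $ k - 3 * bb y $ x * bb y $ k))
           = (T y * (1 + 2 * f y)) * (G y $ k $ x * Bv y $ x) - (3 * T y * bb y $ k) * (bb y $ x * Bv y $ x)"
          using symA[rule_format, of x k] by (simp add: algebra_simps)
      qed
      also have "\<dots> = (T y * (1 + 2 * f y)) * (\<Sum>i\<in>UNIV. G y $ k $ i * Bv y $ i) - (3 * T y * bb y $ k) * (\<Sum>i\<in>UNIV. bb y $ i * Bv y $ i)"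
        by (simp add: sum_subtractf sum_distrib_left)
      finally show ?thesis by (simp add: algebra_simps)
    qed
    also have "\<dots> = 2 * T y * ((1 + 2 * f y) * bb y $ k - 3 * f y * bb y $ k)"
      using GB[OF y] fB by simp
    also have "\<dots> = 2 * T y * (1 - f y) * bb y $ k" by (simp add: algebra_simps)
    finally show ?thesis .
  qed
  have c0: "1 - f y \<noteq> 0" using lt1 y unfolding f_def by auto
  have d1f: "(\<lambda>z. 1 - f z) differentiable (at y)" using df by (intro differentiable_diff differentiable_const)
  have dh: "(\<lambda>z. T z / (1 - f z)) differentiable (at y)"
    using dT y d1f c0 by (intro differentiable_divide) auto
  have "pd (\<lambda>z. T z / (1 - f z)) k y = 0" for k
  proof -
    have "pd (\<lambda>z. T z / (1 - f z)) k y = pd T k y / (1 - f y) - T y * pd (\<lambda>z. 1 - f z) k y / ((1 - f y) * (1 - f y))"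
      by (rule pd_divide) (use dT y d1f c0 in auto)
    also have "\<dots> = (- 2 * (T y)^2 * bb y $ k) / (1 - f y) - T y * (- (2 * T y * (1 - f y) * bb y $ k)) / ((1 - f y) * (1 - f y))"
      using pd_cminus[OF df] pdf e2 y by simp
    also have "\<dots> = 0" by (rule final_arith[OF c0])
    finally show ?thesis .
  qed
  then have "((\<lambda>z. T z / (1 - f z)) has_derivative (\<lambda>v. 0)) (at y)"
    using pd_has[OF dh] by simp
  then show ?thesis unfolding f_def .
qed

lemma smooth_diff:
  assumes "smooth_on U f" "x \<in> U"
  shows "f differentiable (at x)"
proof -
  have "Ck_on (Suc 0) U f" using assms(1) unfolding smooth_on_def by blast
  then show ?thesis using assms(2) by simp
qed

lemma lc_const:
  assumes conn: "connected_space X"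
    and lc: "\<forall>p\<in>topspace X. \<exists>V. openin X V \<and> p \<in> V \<and> (\<forall>q\<in>V. H q = H p)"
    and p: "p \<in> topspace X" and q: "q \<in> topspace X"
  shows "H p = H q"
proof -
  define S where "S = {x\<in>topspace X. H x = H p}"
  have o1: "openin X S"
    unfolding openin_subopen[of X S]
  proof
    fix x assume xS: "x \<in> S"
    then have xt: "x \<in> topspace X" and hx: "H x = H p" unfolding S_def by simp_all
    from lc xt obtain V where V: "openin X V" "x \<in> V" "\<forall>q\<in>V. H q = H x" by blast
    have "V \<subseteq> S"
    proof
      fix q assume qV: "q \<in> V"
      then have "q \<in> topspace X" using openin_subset[OF V(1)] by blast
      moreover have "H q = H p" using V(3) qV hx by simp
      ultimately show "q \<in> S" unfolding S_def by simp
    qed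
    then show "\<exists>T. openin X T \<and> x \<in> T \<and> T \<subseteq> S" using V(1,2) by blast
  qed
  have o2: "openin X (topspace X - S)"
    unfolding openin_subopen[of X "topspace X - S"]
  proof
    fix x assume xS: "x \<in> topspace X - S"
    then have xt: "x \<in> topspace X" and hx: "H x \<noteq> H p" unfolding S_def by simp_all
    from lc xt obtain V where V: "openin X V" "x \<in> V" "\<forall>q\<in>V. H q = H x" by blast
    have "V \<subseteq> topspace X - S"
    proof
      fix q assume qV: "q \<in> V"
      then have "q \<in> topspace X" using openin_subset[OF V(1)] by blast
      moreover have "H q \<noteq> H p" using V(3) qV hx by simp
      ultimately show "q \<in> topspace X - S" unfolding S_def by simp
    qed
    then show "\<exists>T. openin X T \<and> x \<in> T \<and> T \<subseteq> topspace X - S" using V(1,2) by blast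
  qed
  have Ssub: "S \<subseteq> topspace X" unfolding S_def by blast
  have "closedin X S" unfolding closedin_def using o2 Ssub by blast
  then have "S = {} \<or> S = topspace X" using conn o1 unfolding connected_space_clopen_in by blast
  moreover have "p \<in> S" using p unfolding S_def by simp
  ultimately have "q \<in> S" using q by blast
  then show ?thesis unfolding S_def by simp
qed

theorem lemma2p3:
  fixes X :: "'a topology"
    and A :: "('a set \<times> ('a \<Rightarrow> real^'n)) set"
    and g :: "'a set \<times> ('a \<Rightarrow> real^'n) \<Rightarrow> real^'n \<Rightarrow> real^'n^'n"
    and b :: "'a set \<times> ('a \<Rightarrow> real^'n) \<Rightarrow> real^'n \<Rightarrow> real^'n"
    and \<tau> :: "'a \<Rightarrow> real"
  assumes manifold: "smooth_manifold X A"
    and conn: "connected_space X"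
    and alpha: "riemannian_metric A g"
    and beta: "one_form A b"
    and bnorm: "\<forall>c\<in>A. \<forall>y\<in>snd c ` fst c. norm_sq (g c y) (b c y) < 1"
    and tau_smooth: "\<forall>c\<in>A. smooth_on (snd c ` fst c) (\<tau> \<circ> inv_into (fst c) (snd c))"
    and eq1: "\<forall>c\<in>A. \<forall>y\<in>snd c ` fst c. \<forall>i j.
        covd (g c) (b c) y i j =
          (\<tau> \<circ> inv_into (fst c) (snd c)) y *
            ((1 + 2 * norm_sq (g c y) (b c y)) * g c y $ i $ j - 3 * b c y $ i * b c y $ j)"
    and eq2: "\<forall>c\<in>A. \<forall>y\<in>snd c ` fst c. \<forall>i.
        pd (\<tau> \<circ> inv_into (fst c) (snd c)) i y =
          - 2 * ((\<tau> \<circ> inv_into (fst c) (snd c)) y)^2 * b c y $ i"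
  shows "\<exists>C::real. \<forall>c\<in>A. \<forall>p\<in>fst c.
           \<tau> p = C * (1 - norm_sq (g c (snd c p)) (b c (snd c p)))"
proof -
  have atlas: "smooth_atlas X A" using manifold unfolding smooth_manifold_def by blast
  have chart: "is_chart X c" if "c \<in> A" for c using atlas that unfolding smooth_atlas_def by blast
  have cover: "(\<Union>c\<in>A. fst c) = topspace X" using atlas unfolding smooth_atlas_def by blast
  have Uopen: "openin X (fst c)" if "c \<in> A" for c using chart[OF that] unfolding is_chart_def by blast
  have Wopen: "open (snd c ` fst c)" if "c \<in> A" for c using chart[OF that] unfolding is_chart_def by blast
  have homeo: "homeomorphic_map (subtopology X (fst c)) (top_of_set (snd c ` fst c)) (snd c)" if "c \<in> A" for c
    using chart[OF that] unfolding is_chart_def by blast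
  have Usub: "fst c \<subseteq> topspace X" if "c \<in> A" for c using openin_subset[OF Uopen[OF that]] .
  have inj: "inj_on (snd c) (fst c)" if "c \<in> A" for c
    using homeomorphic_imp_injective_map[OF homeo[OF that]] Usub[OF that]
    by (simp add: Int_absorb1)
  have invf: "inv_into (fst c) (snd c) (snd c p) = p" if "c \<in> A" "p \<in> fst c" for c p
    using inv_into_f_f[OF inj[OF that(1)] that(2)] .
  have aS: "\<forall>c\<in>A. (\<forall>i j. smooth_on (snd c ` fst c) (\<lambda>y. g c y $ i $ j)) \<and>
        (\<forall>y\<in>snd c ` fst c. transpose (g c y) = g c y \<and>
            (\<forall>v. v \<noteq> 0 \<longrightarrow> v \<bullet> (g c y *v v) > 0))"
    using alpha unfolding riemannian_metric_def by (rule conjunct1)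
  have aT: "\<forall>c\<in>A. \<forall>d\<in>A. \<forall>y\<in>snd c ` (fst c \<inter> fst d).
        g c y = transpose (jacobian (transition c d) y) ** g d (transition c d y)
                ** jacobian (transition c d) y"
    using alpha unfolding riemannian_metric_def by (rule conjunct2)
  have bS: "\<forall>c\<in>A. \<forall>i. smooth_on (snd c ` fst c) (\<lambda>y. b c y $ i)"
    using beta unfolding one_form_def by (rule conjunct1)
  have bT: "\<forall>c\<in>A. \<forall>d\<in>A. \<forall>y\<in>snd c ` (fst c \<inter> fst d).
        b c y = transpose (jacobian (transition c d) y) *v b d (transition c d y)"
    using beta unfolding one_form_def by (rule conjunct2)
  have gsm: "smooth_on (snd c ` fst c) (\<lambda>y. g c y $ i $ j)" if "c \<in> A" for c i j
    using aS that by blast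
  have gsym: "transpose (g c y) = g c y" if "c \<in> A" "y \<in> snd c ` fst c" for c y
    using aS that by blast
  have gpos: "\<forall>v. v \<noteq> 0 \<longrightarrow> v \<bullet> (g c y *v v) > 0" if "c \<in> A" "y \<in> snd c ` fst c" for c y
    using aS that by blast
  have bsm: "smooth_on (snd c ` fst c) (\<lambda>y. b c y $ i)" if "c \<in> A" for c i
    using bS that by blast
  define ns where "ns c p = norm_sq (g c (snd c p)) (b c (snd c p))" for c p
  have inv_ns: "ns c p = ns d p" if cd: "c \<in> A" "d \<in> A" and p: "p \<in> fst c" "p \<in> fst d" for c d p
  proof -
    define y where "y = snd c p"
    have yin: "y \<in> snd c ` (fst c \<inter> fst d)" using p y_def by auto
    have tr: "transition c d y = snd d p"
      unfolding transition_def y_def using invf[OF cd(1) p(1)] by simp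
    have gt0: "g c y = transpose (jacobian (transition c d) y) ** g d (transition c d y) ** jacobian (transition c d) y"
      using aT cd yin by blast
    have gt: "g c y = transpose (jacobian (transition c d) y) ** g d (snd d p) ** jacobian (transition c d) y"
      using gt0 unfolding tr .
    have bt0: "b c y = transpose (jacobian (transition c d) y) *v b d (transition c d y)"
      using bT cd yin by blast
    have bt: "b c y = transpose (jacobian (transition c d) y) *v b d (snd d p)"
      using bt0 unfolding tr .
    have posc: "\<forall>v. v \<noteq> 0 \<longrightarrow> v \<bullet> (g c y *v v) > 0"
      using gpos[OF cd(1)] p(1) unfolding y_def by blast
    have posd: "\<forall>v. v \<noteq> 0 \<longrightarrow> v \<bullet> (g d (snd d p) *v v) > 0"
      using gpos[OF cd(2)] p(2) by blast
    have "norm_sq (g c y) (b c y) = norm_sq (g d (snd d p)) (b d (snd d p))"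
      by (rule norm_sq_invariant[OF gt bt posc posdef_invertible(1)[OF posd]])
    then show ?thesis unfolding ns_def y_def by simp
  qed
  define N where "N p = ns (SOME c. c \<in> A \<and> p \<in> fst c) p" for p
  have Nc: "N p = ns c p" if "c \<in> A" "p \<in> fst c" for c p
  proof -
    have "\<exists>c. c \<in> A \<and> p \<in> fst c" using that by blast
    then have "(SOME c. c \<in> A \<and> p \<in> fst c) \<in> A \<and> p \<in> fst (SOME c. c \<in> A \<and> p \<in> fst c)"
      by (rule someI_ex)
    then show ?thesis unfolding N_def using inv_ns that by blast
  qed
  define H where "H p = \<tau> p / (1 - N p)" for p
  have lc: "\<forall>p\<in>topspace X. \<exists>V. openin X V \<and> p \<in> V \<and> (\<forall>q\<in>V. H q = H p)"
  proof
    fix p assume "p \<in> topspace X"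
    then obtain c where c: "c \<in> A" "p \<in> fst c" using cover by blast
    define W where "W = snd c ` fst c"
    define T where "T = \<tau> \<circ> inv_into (fst c) (snd c)"
    define h where "h z = T z / (1 - norm_sq (g c z) (b c z))" for z
    have y: "snd c p \<in> W" using c W_def by auto
    have hd: "(h has_derivative (\<lambda>v. 0)) (at z)" if "z \<in> W" for z
      unfolding h_def
    proof (rule local_zero[where W=W])
      show "open W" using Wopen[OF c(1)] W_def by simp
      show "\<forall>i j. \<forall>y\<in>W. (\<lambda>z. g c z $ i $ j) differentiable (at y)"
        using gsm[OF c(1)] smooth_diff unfolding W_def by blast
      show "\<forall>i. \<forall>y\<in>W. (\<lambda>z. b c z $ i) differentiable (at y)"
        using bsm[OF c(1)] smooth_diff unfolding W_def by blast
      show "\<forall>y\<in>W. T differentiable (at y)"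
        using tau_smooth c(1) smooth_diff unfolding T_def W_def by blast
      show "\<forall>y\<in>W. transpose (g c y) = g c y"
        using gsym[OF c(1)] unfolding W_def by blast
      show "\<forall>y\<in>W. \<forall>v. v \<noteq> 0 \<longrightarrow> v \<bullet> (g c y *v v) > 0"
        using gpos[OF c(1)] unfolding W_def by blast
      show "\<forall>y\<in>W. norm_sq (g c y) (b c y) < 1" using bnorm c(1) W_def by blast
      show "\<forall>y\<in>W. \<forall>i j. covd (g c) (b c) y i j =
          T y * ((1 + 2 * norm_sq (g c y) (b c y)) * g c y $ i $ j - 3 * b c y $ i * b c y $ j)"
        using eq1 c(1) unfolding T_def W_def by blast
      show "\<forall>y\<in>W. \<forall>i. pd T i y = - 2 * (T y)^2 * b c y $ i"
        using eq2 c(1) unfolding T_def W_def by blast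
      show "z \<in> W" by fact
    qed
    obtain e where e: "e > 0" "ball (snd c p) e \<subseteq> W"
      using Wopen[OF c(1)] y W_def open_contains_ball by blast
    have "\<exists>C. \<forall>z\<in>ball (snd c p) e. h z = C"
    proof (rule has_derivative_zero_constant[OF convex_ball])
      fix z assume "z \<in> ball (snd c p) e"
      then have "z \<in> W" using e by blast
      then show "(h has_derivative (\<lambda>h. 0)) (at z within ball (snd c p) e)"
        by (rule has_derivative_at_withinI[OF hd])
    qed
    then obtain C where C: "\<forall>z\<in>ball (snd c p) e. h z = C" by blast
    define V where "V = {q \<in> topspace (subtopology X (fst c)). snd c q \<in> ball (snd c p) e}"
    have "openin (top_of_set W) (ball (snd c p) e)"
      using e(2) by (simp add: openin_open_eq[OF Wopen[OF c(1)], folded W_def])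
    then have "openin (subtopology X (fst c)) V"
      using homeomorphic_imp_continuous_map[OF homeo[OF c(1)]] unfolding continuous_map V_def W_def
      by blast
    then have oV: "openin X V" using openin_trans_full Uopen[OF c(1)] by blast
    have Vsub: "V \<subseteq> fst c" unfolding V_def by auto
    have hq: "H q = h (snd c q)" if "q \<in> fst c" for q
      unfolding H_def h_def T_def using invf[OF c(1) that] Nc[OF c(1) that] ns_def by simp
    have pV: "p \<in> V" unfolding V_def using c Usub[OF c(1)] e(1) by auto
    have "\<forall>q\<in>V. H q = H p"
    proof
      fix q assume q: "q \<in> V"
      then have "H q = C" using hq Vsub C unfolding V_def by auto
      moreover have "H p = C" using hq c(2) C e(1) by simp
      ultimately show "H q = H p" by simp
    qed
    then show "\<exists>V. openin X V \<and> p \<in> V \<and> (\<forall>q\<in>V. H q = H p)" using oV pV by blast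
  qed
  define C where "C = H (SOME p. p \<in> topspace X)"
  show ?thesis
  proof (intro exI ballI)
    fix c p assume c: "c \<in> A" and p: "p \<in> fst c"
    have pt: "p \<in> topspace X" using Usub[OF c] p by blast
    then have st: "(SOME p. p \<in> topspace X) \<in> topspace X" by (rule someI)
    have HC: "H p = C" unfolding C_def by (rule lc_const[OF conn lc pt st])
    have "snd c p \<in> snd c ` fst c" using p by simp
    then have "norm_sq (g c (snd c p)) (b c (snd c p)) < 1" using bnorm c by blast
    then have lt: "N p < 1" using Nc[OF c p] unfolding ns_def by simp
    have nz: "1 - N p \<noteq> 0" using lt by simp
    have tH: "\<tau> p = H p * (1 - N p)" unfolding H_def using nz by (simp add: field_simps)
    have Ne: "N p = norm_sq (g c (snd c p)) (b c (snd c p))" using Nc[OF c p] unfolding ns_def .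
    show "\<tau> p = C * (1 - norm_sq (g c (snd c p)) (b c (snd c p)))"
      using tH unfolding HC Ne .
  qed
qed

end
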